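(* For all complex $t$ with $0<|t|<1$, \[ \frac{1}{t^2}\left(1-\frac{1}{\binom{2t}{t}}\right)=\sum_{n=0}^{\infty}(-1)^n\frac{I_n}{n!}\,t^n, \] where $I_n:=\iint_T \frac{(-\ln xy)^n}{xy}\,dx\,dy$.
   Context: $T:=\{(x,y)\in[0,1]^2 : x+y\ge 1\}$. The generalized binomial coefficient is $\binom{s}{t}:=\frac{\Gamma(s+1)}{\Gamma(t+1)\Gamma(s-t+1)}$, so $\binom{2t}{t}=\Gamma(2t+1)/\Gamma(t+1)^2$. *)

theory Defs
  imports "HOL-Analysis.Analysis"
begin

definition gbinom :: "complex \<Rightarrow> complex \<Rightarrow> complex" where
  "gbinom s t = Gamma (s + 1) / (Gamma (t + 1) * Gamma (s - t + 1))"

definition Tri :: "(real \<times> real) set" where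
  "Tri = {(x, y). 0 \<le> x \<and> x \<le> 1 \<and> 0 \<le> y \<and> y \<le> 1 \<and> x + y \<ge> 1}"

definition Icoef :: "nat \<Rightarrow> real" where
  "Icoef n = (LINT p:Tri|lborel. (- ln (fst p * snd p)) ^ n / (fst p * snd p))"

end

theory Submission
  imports Defs
begin

lemma cpowr_norm: "x \<ge> 0 \<Longrightarrow> norm (complex_of_real x powr w) = x powr Re w"
  by (simp add: norm_powr_real_powr)

lemma cpowr_norm1: "x \<le> 1 \<Longrightarrow> norm ((1 - complex_of_real x) powr w) = (1 - x) powr Re w"
  using cpowr_norm[of "1 - x" w] by simp

lemma cpowr_split: "(z::complex) powr c = z * z powr (c - 1)"
  by (metis powr_add powr_to_1 diff_add_cancel mult.commute)

definition bint :: "complex \<Rightarrow> complex \<Rightarrow> complex" where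
  "bint a c = integral {0..1} (\<lambda>x::real. complex_of_real x powr (a - 1) * (1 - complex_of_real x) powr (c - 1))"

lemma beta_abs_int:
  assumes "Re a > 0" "Re b > 0"
  shows "(\<lambda>x::real. complex_of_real x powr (a - 1) * (1 - complex_of_real x) powr (b - 1))
           absolutely_integrable_on {0..1}"
proof -
  have "(\<lambda>x::real. complex_of_real x powr (a - 1) * (1 - complex_of_real x) powr (b - 1))
           absolutely_integrable_on {0<..<1}"
  proof (rule measurable_bounded_by_integrable_imp_absolutely_integrable)
    show "(\<lambda>x::real. complex_of_real x powr (a - 1) * (1 - complex_of_real x) powr (b - 1))
       \<in> borel_measurable (lebesgue_on {0<..<1})"
      by (intro continuous_imp_measurable_on_sets_lebesgue continuous_intros) auto
    show "(\<lambda>t. t powr (Re a - 1) * (1 - t) powr (Re b - 1)) integrable_on {0<..<1}"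
      using integrable_Beta'[of "Re a" "Re b"] assms by (simp add: integrable_on_Icc_iff_Ioo)
    fix x :: real assume "x \<in> {0<..<1}"
    then show "norm (complex_of_real x powr (a - 1) * (1 - complex_of_real x) powr (b - 1))
          \<le> x powr (Re a - 1) * (1 - x) powr (Re b - 1)"
      by (simp add: norm_mult cpowr_norm cpowr_norm1)
  qed auto
  then show ?thesis by (simp add: absolutely_integrable_on_Icc_iff_Ioo)
qed

lemma bint_has_integral:
  assumes "Re a > 0" "Re b > 0"
  shows "((\<lambda>x::real. complex_of_real x powr (a - 1) * (1 - complex_of_real x) powr (b - 1))
           has_integral bint a b) {0..1}"
  unfolding bint_def using beta_abs_int[OF assms] set_lebesgue_integral_eq_integral(1) 
  by (simp add: has_integral_integral set_lebesgue_integral_eq_integral(1))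

lemma bint_rec:
  assumes a: "Re a > 0" and c: "Re c > 0"
  shows "(a + c) * bint a (c + 1) = c * bint a c"
proof -
  let ?F = "\<lambda>x::real. complex_of_real x powr a * (1 - complex_of_real x) powr c"
  let ?E0 = "\<lambda>x::real. complex_of_real x powr (a - 1) * (1 - complex_of_real x) powr (c - 1)"
  let ?E1 = "\<lambda>x::real. complex_of_real x powr (a - 1) * (1 - complex_of_real x) powr (c + 1 - 1)"
  have c1: "Re (c + 1) > 0" using c by simp
  have "((\<lambda>x. (a + c) * ?E1 x - c * ?E0 x) has_integral ((a + c) * bint a (c + 1) - c * bint a c)) {0..1}"
    by (intro has_integral_diff has_integral_mult_right bint_has_integral a c c1)
  moreover have "((\<lambda>x. (a + c) * ?E1 x - c * ?E0 x) has_integral (?F 1 - ?F 0)) {0..1}"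
  proof (rule fundamental_theorem_of_calculus_interior)
    show "continuous_on {0..1} ?F"
      using a c by (intro continuous_intros) auto
    fix x :: real assume x: "x \<in> {0<..<1}"
    have nz: "complex_of_real x \<notin> \<real>\<^sub>\<le>\<^sub>0" "1 - complex_of_real x \<notin> \<real>\<^sub>\<le>\<^sub>0"
      using x by (auto simp: complex_nonpos_Reals_iff)
    have "((\<lambda>z. z powr a * (1 - z) powr c) has_field_derivative
          (a * complex_of_real x powr (a - 1) * (1 - complex_of_real x) powr c
           - c * complex_of_real x powr a * (1 - complex_of_real x) powr (c - 1))) (at (complex_of_real x))"
      using nz by (auto intro!: derivative_eq_intros simp: algebra_simps)
    moreover have "a * complex_of_real x powr (a - 1) * (1 - complex_of_real x) powr c
           - c * complex_of_real x powr a * (1 - complex_of_real x) powr (c - 1)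
         = (a + c) * ?E1 x - c * ?E0 x"
    proof -
      have e1: "(1 - complex_of_real x) powr c = (1 - complex_of_real x) * (1 - complex_of_real x) powr (c - 1)"
        by (rule cpowr_split)
      have e2: "complex_of_real x powr a = complex_of_real x * complex_of_real x powr (a - 1)"
        by (rule cpowr_split)
      have e3: "c + 1 - 1 = c" by simp
      show ?thesis unfolding e3 e1 e2 by (simp add: algebra_simps)
    qed
    ultimately show "(?F has_vector_derivative ((a + c) * ?E1 x - c * ?E0 x)) (at x)"
      by (auto dest: has_vector_derivative_real_field)
  qed simp
  ultimately have "(a + c) * bint a (c + 1) - c * bint a c = ?F 1 - ?F 0"
    by (rule has_integral_unique)
  also have "?F 1 - ?F 0 = 0" using a c by simp
  finally show ?thesis by simp
qed



lemma bint_scaled: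
  assumes a: "Re a > 0" and c: "Re c > 0" and n: "n > 0"
  shows "((\<lambda>s::real. complex_of_real s powr (a - 1) * (1 - complex_of_real s / of_nat n) powr (c + of_nat n - 1))
          has_integral (of_nat n powr a * bint a (c + of_nat n))) {0..real n}"
proof -
  let ?f = "\<lambda>x::real. complex_of_real x powr (a - 1) * (1 - complex_of_real x) powr (c + of_nat n - 1)"
  have cn: "Re (c + of_nat n) > 0" using c by simp
  have "(?f has_integral bint a (c + of_nat n)) (cbox 0 1)"
    using bint_has_integral[OF a cn] by simp
  from has_integral_affinity'[OF this, of "1 / real n" 0] n
  have "((\<lambda>s. ?f ((1 / real n) *\<^sub>R s + 0)) has_integral (bint a (c + of_nat n) /\<^sub>R (1 / real n) ^ DIM(real))) (cbox ((0 - 0) /\<^sub>R (1 / real n)) ((1 - 0) /\<^sub>R (1 / real n)))"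
    by simp
  then have "((\<lambda>s. ?f (s / real n)) has_integral (real n *\<^sub>R bint a (c + of_nat n))) {0..real n}"
    by simp
  then have H: "((\<lambda>s. of_nat n powr (a - 1) * ?f (s / real n)) has_integral
        (of_nat n powr (a - 1) * (of_nat n * bint a (c + of_nat n)))) {0..real n}"
    by (intro has_integral_mult_right) (simp add: scaleR_conv_of_real)
  moreover have K: "of_nat n powr (a - 1) * (of_nat n * bint a (c + of_nat n)) = of_nat n powr a * bint a (c + of_nat n)"
    by (subst cpowr_split[of "of_nat n" a]) (simp only: mult_ac)
  moreover have P: "of_nat n powr (a - 1) * ?f (s / real n) =
      complex_of_real s powr (a - 1) * (1 - complex_of_real s / of_nat n) powr (c + of_nat n - 1)"
    if s: "s \<in> {0..real n}" for s
  proof -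
    have e: "complex_of_real (s / real n) * of_nat n = complex_of_real s" using n by simp
    have "(complex_of_real (s / real n) * of_nat n) powr (a - 1) = complex_of_real (s / real n) powr (a - 1) * of_nat n powr (a - 1)"
      using s by (intro powr_times_real) auto
    then have e2: "complex_of_real (s / real n) powr (a - 1) * of_nat n powr (a - 1) = complex_of_real s powr (a - 1)"
      unfolding e by simp
    have e3: "1 - complex_of_real (s / real n) = 1 - complex_of_real s / of_nat n" by simp
    show ?thesis unfolding e3 e2[symmetric] by (simp only: mult_ac)
  qed
  ultimately show ?thesis
    using has_integral_eq[OF P H] by (simp only: K)
qed



lemma bint_asymp:
  assumes a: "Re a > 0" and c: "Re c > 0"
  shows "(\<lambda>n. of_nat n powr a * bint a (c + of_nat n)) \<longlonglongrightarrow> Gamma a"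
proof -
  define f where "f = (\<lambda>k::nat. \<lambda>s::real. if s \<in> {0..real k} then
      complex_of_real s powr (a - 1) * (1 - complex_of_real s / of_nat k) powr (c + of_nat k - 1) else 0)"
  define g where "g = (\<lambda>s::real. complex_of_real s powr (a - 1) / complex_of_real (exp s))"
  define h where "h = (\<lambda>s::real. exp 1 * (s powr (Re a - 1) / exp s))"
  have fint: "(f k has_integral (of_nat k powr a * bint a (c + of_nat k))) {0..}" for k
  proof (cases "k = 0")
    case True
    have "((\<lambda>s. complex_of_real s powr (a - 1) * (1 - complex_of_real s / of_nat k) powr (c + of_nat k - 1))
          has_integral 0) {0..real k}" using True by (simp add: has_integral_refl)
    then show ?thesis using True unfolding f_def by (subst has_integral_restrict) auto
  next
    case False
    then show ?thesis unfolding f_def using bint_scaled[OF a c, of k]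
      by (subst has_integral_restrict) auto
  qed
  have hint: "h integrable_on {0..}"
    unfolding h_def using Gamma_integral_real[of "Re a"] a
    by (intro integrable_on_mult_right) (auto intro: has_integral_integrable)
  have le: "norm (f k s) \<le> h s" if s: "s \<in> {0..}" for k s
  proof (cases "s \<in> {0..real k} \<and> s > 0")
    case False
    have "h s \<ge> 0" unfolding h_def by simp
    moreover have "f k s = 0 \<or> s = 0" using False s by (auto simp: f_def)
    moreover have "f k 0 = 0" by (simp add: f_def)
    ultimately show ?thesis by auto
  next
    case True
    then have k: "real k > 0" and s0: "s > 0" and sk: "s \<le> real k" by auto
    define b where "b = 1 - s / real k"
    have b0: "b \<ge> 0" and b1: "b \<le> 1" using k sk s0 by (auto simp: b_def field_simps)
    have "norm (f k s) = s powr (Re a - 1) * b powr (Re c + real k - 1)"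
    proof -
      have "norm ((1 - complex_of_real s / of_nat k) powr (c + of_nat k - 1)) = b powr (Re c + real k - 1)"
        using cpowr_norm[of b "c + of_nat k - 1"] b0 by (simp add: b_def)
      then show ?thesis using True by (simp add: f_def norm_mult cpowr_norm)
    qed
    also have "b powr (Re c + real k - 1) \<le> b powr (real k - 1)"
      using b0 b1 c by (intro powr_mono') auto
    also have "b powr (real k - 1) \<le> exp (- s / real k) powr (real k - 1)"
    proof (cases "k = 1")
      case False
      then have "real k - 1 \<ge> 0" using k by auto
      moreover have "b \<le> exp (- s / real k)" unfolding b_def
        using exp_ge_add_one_self[of "- s / real k"] by simp
      ultimately show ?thesis using b0 by (intro powr_mono2) auto
    qed simp
    also have "\<dots> = exp (- s + s / real k)"
      using k by (simp add: exp_powr_real field_simps)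
    also have "\<dots> \<le> exp (1 - s)" using sk k by (simp add: field_simps)
    finally have "norm (f k s) \<le> s powr (Re a - 1) * exp (1 - s)"
      by (simp add: mult_left_mono)
    also have "\<dots> = h s" by (simp add: h_def exp_diff)
    finally show ?thesis .
  qed
  have conv: "(\<lambda>k. f k s) \<longlonglongrightarrow> g s" if s: "s \<in> {0..}" for s
  proof -
    have ev: "eventually (\<lambda>k. real k > s) sequentially"
      using eventually_gt_at_top[of "nat \<lceil>s\<rceil>"] by eventually_elim linarith
    have e1: "(\<lambda>k. 1 - complex_of_real s / of_nat k) \<longlonglongrightarrow> 1"
      using tendsto_diff[OF tendsto_const[of 1] lim_const_over_n[of "complex_of_real s"]] by simp
    have e2: "(\<lambda>k. (1 - complex_of_real s / of_nat k) powr (c - 1)) \<longlonglongrightarrow> 1 powr (c - 1)"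
      by (intro tendsto_powr_complex' e1 tendsto_const) auto
    have e3: "(\<lambda>k. complex_of_real ((1 - s / real k) ^ k)) \<longlonglongrightarrow> complex_of_real (exp (- s))"
      using tendsto_exp_limit_sequentially[of "-s"] by (intro tendsto_of_real) simp
    have "(\<lambda>k. complex_of_real s powr (a - 1) * ((1 - complex_of_real s / of_nat k) powr (c - 1) *
              complex_of_real ((1 - s / real k) ^ k))) \<longlonglongrightarrow>
          complex_of_real s powr (a - 1) * (1 powr (c - 1) * complex_of_real (exp (- s)))"
      by (intro tendsto_intros e2 e3)
    also have "complex_of_real s powr (a - 1) * (1 powr (c - 1) * complex_of_real (exp (- s))) = g s"
      by (simp add: g_def exp_minus field_simps)
    finally show ?thesis
    proof (rule Lim_transform_eventually)
      show "eventually (\<lambda>k. complex_of_real s powr (a - 1) * ((1 - complex_of_real s / of_nat k) powr (c - 1) *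
              complex_of_real ((1 - s / real k) ^ k)) = f k s) sequentially"
        using ev
      proof eventually_elim
        case (elim k)
        then have k: "real k > 0" using s by auto
        have nz: "1 - complex_of_real s / of_nat k \<noteq> 0"
          using elim k by (auto simp: complex_eq_iff)
        have "(1 - complex_of_real s / of_nat k) powr (c + of_nat k - 1) =
              (1 - complex_of_real s / of_nat k) powr (c - 1) * (1 - complex_of_real s / of_nat k) powr (of_nat k)"
          by (simp add: powr_add[symmetric] algebra_simps)
        also have "(1 - complex_of_real s / of_nat k) powr (of_nat k) = (1 - complex_of_real s / of_nat k) ^ k"
          by (rule powr_complexpow[OF nz])
        also have "\<dots> = complex_of_real ((1 - s / real k) ^ k)" by simp
        finally show ?case using elim s by (simp add: f_def)
      qed
    qed
  qed
  have "(\<lambda>k. integral {0..} (f k)) \<longlonglongrightarrow> integral {0..} g"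
    using dominated_convergence(2)[of f "{0..}" h g] fint hint le conv
    by (auto simp: has_integral_integrable)
  moreover have "integral {0..} (f k) = of_nat k powr a * bint a (c + of_nat k)" for k
    using fint[of k] by (rule integral_unique)
  moreover have "integral {0..} g = Gamma a"
    unfolding g_def using Gamma_integral_complex[OF a] by (rule integral_unique)
  ultimately show ?thesis by simp
qed



lemma poch_nz: "Re (z::complex) > 0 \<Longrightarrow> pochhammer z n \<noteq> 0"
  by (subst pochhammer_eq_0_iff) auto

lemma bint_poch:
  assumes a: "Re a > 0" and c: "Re c > 0"
  shows "bint a c * pochhammer c n = bint a (c + of_nat n) * pochhammer (a + c) n"
proof (induction n)
  case 0
  then show ?case by simp
next
  case (Suc n)
  have cn: "Re (c + of_nat n) > 0" using c by simp
  have "bint a c * pochhammer c (Suc n) = bint a c * pochhammer c n * (c + of_nat n)"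
    by (simp add: pochhammer_Suc)
  also have "\<dots> = pochhammer (a + c) n * ((c + of_nat n) * bint a (c + of_nat n))"
    using Suc.IH by (simp add: algebra_simps)
  also have "(c + of_nat n) * bint a (c + of_nat n) = (a + (c + of_nat n)) * bint a (c + of_nat n + 1)"
    using bint_rec[OF a cn] by simp
  also have "pochhammer (a + c) n * ((a + (c + of_nat n)) * bint a (c + of_nat n + 1))
       = bint a (c + of_nat (Suc n)) * pochhammer (a + c) (Suc n)"
    by (simp add: pochhammer_Suc algebra_simps)
  finally show ?case .
qed

lemma aux_field:
  fixes P Q f E F N u v :: complex
  assumes "P \<noteq> 0" "f \<noteq> 0" "E \<noteq> 0" "F \<noteq> 0" "N \<noteq> 0" "u \<noteq> 0" "v \<noteq> 0"
  shows "(f * F / (P * u)) * ((Q * v) / (f * (E * F))) * ((u / N) / (v / N)) = Q / (P * E)"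
  using assms by (simp add: field_simps)

lemma poch_ratio_lim:
  assumes a: "Re a > 0" and c: "Re c > 0"
  shows "(\<lambda>n. pochhammer (a + c) n / (pochhammer c n * of_nat n powr a)) \<longlonglongrightarrow> Gamma c * rGamma (a + c)"
proof -
  have r1: "(\<lambda>n. (c / of_nat n + 1) / ((a + c) / of_nat n + 1)) \<longlonglongrightarrow> (0 + 1) / (0 + 1)"
    by (intro tendsto_intros) auto
  have "(\<lambda>n. Gamma_series c n * rGamma_series (a + c) n * ((c / of_nat n + 1) / ((a + c) / of_nat n + 1)))
        \<longlonglongrightarrow> Gamma c * rGamma (a + c) * ((0 + 1) / (0 + 1))"
    by (intro tendsto_intros r1)
  then have L: "(\<lambda>n. Gamma_series c n * rGamma_series (a + c) n * ((c / of_nat n + 1) / ((a + c) / of_nat n + 1)))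
        \<longlonglongrightarrow> Gamma c * rGamma (a + c)" by simp
  show ?thesis
  proof (rule Lim_transform_eventually[OF L])
    show "eventually (\<lambda>n. Gamma_series c n * rGamma_series (a + c) n * ((c / of_nat n + 1) / ((a + c) / of_nat n + 1))
       = pochhammer (a + c) n / (pochhammer c n * of_nat n powr a)) sequentially"
      using eventually_gt_at_top[of "0::nat"]
    proof eventually_elim
      case (elim n)
      have p1: "pochhammer c n \<noteq> 0" "pochhammer c (n + 1) \<noteq> 0" "pochhammer (a + c) (n + 1) \<noteq> 0"
        using a c by (auto intro!: poch_nz)
      have nz: "c + of_nat n \<noteq> 0" "a + c + of_nat n \<noteq> 0" using a c by (auto simp: complex_eq_iff)
      have n0: "(of_nat n :: complex) \<noteq> 0" using elim by simp
      have pw: "of_nat n powr a = exp (a * of_real (ln (real n)))"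
        using elim by (simp add: powr_def)
      have fn: "(fact n :: complex) \<noteq> 0" by simp
      have e: "exp ((a + c) * of_real (ln (real n))) = exp (a * of_real (ln (real n))) * exp (c * of_real (ln (real n)))"
        by (simp add: exp_add[symmetric] algebra_simps)
      have q1: "(c / of_nat n + 1) = (c + of_nat n) / of_nat n" "((a + c) / of_nat n + 1) = (a + c + of_nat n) / of_nat n"
        using n0 by (simp_all add: field_simps)
      have ps: "pochhammer c (n + 1) = pochhammer c n * (c + of_nat n)"
               "pochhammer (a + c) (n + 1) = pochhammer (a + c) n * (a + c + of_nat n)"
        by (simp_all add: pochhammer_Suc)
      show ?case
        unfolding Gamma_series_def rGamma_series_def pw e q1 ps
        by (rule aux_field) (use p1 nz n0 fn in auto)
    qed
  qed
qed

lemma bint_Beta: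
  assumes a: "Re a > 0" and c: "Re c > 0"
  shows "bint a c = Beta a c"
proof -
  have L: "(\<lambda>n. (of_nat n powr a * bint a (c + of_nat n)) *
           (pochhammer (a + c) n / (pochhammer c n * of_nat n powr a))) \<longlonglongrightarrow> Gamma a * (Gamma c * rGamma (a + c))"
    by (intro tendsto_mult bint_asymp poch_ratio_lim a c)
  have "eventually (\<lambda>n. (of_nat n powr a * bint a (c + of_nat n)) *
           (pochhammer (a + c) n / (pochhammer c n * of_nat n powr a)) = bint a c) sequentially"
    using eventually_gt_at_top[of "0::nat"]
  proof eventually_elim
    case (elim n)
    have p1: "pochhammer c n \<noteq> 0"
      using c by (auto intro!: poch_nz)
    have pw: "(of_nat n :: complex) powr a \<noteq> 0" using elim by (simp add: powr_def)
    have "(of_nat n powr a * bint a (c + of_nat n)) * (pochhammer (a + c) n / (pochhammer c n * of_nat n powr a))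
        = bint a (c + of_nat n) * pochhammer (a + c) n / pochhammer c n"
      using p1 pw by (simp add: field_simps)
    also have "\<dots> = bint a c" using bint_poch[OF a c, of n] p1 by (simp add: field_simps)
    finally show ?case .
  qed
  with L have "(\<lambda>n. bint a c) \<longlonglongrightarrow> Gamma a * (Gamma c * rGamma (a + c))"
    by (rule Lim_transform_eventually)
  then have "bint a c = Gamma a * (Gamma c * rGamma (a + c))" by (rule LIMSEQ_const_iff[THEN iffD1])
  then show ?thesis by (simp add: Beta_altdef mult_ac)
qed



lemma of_real_at_right_0: "filterlim (\<lambda>x::real. complex_of_real x) (at 0) (at_right 0)"
proof -
  have "((\<lambda>x::real. complex_of_real x) \<longlongrightarrow> complex_of_real 0) (at_right 0)"
    by (intro tendsto_intros)
  moreover have "eventually (\<lambda>x::real. complex_of_real x \<noteq> 0) (at_right 0)"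
    using eventually_at_right_less[of "0::real"] by eventually_elim auto
  ultimately show ?thesis unfolding filterlim_at by auto
qed

lemma ftc_identity:
  assumes t1: "Re t > -1" and t0: "t \<noteq> 0"
  shows "((\<lambda>x::real. complex_of_real x powr (t - 1) * (1 - (1 - complex_of_real x) powr t))
           has_integral ((1 - (2 * t + 1) * Beta (t + 1) (t + 1)) / t)) {0..1}"
proof -
  define A where "A = (\<lambda>x::real. complex_of_real x powr (t - 1) * (1 - (1 - complex_of_real x) powr t))"
  define B where "B = (\<lambda>x::real. complex_of_real x powr t * (1 - complex_of_real x) powr t)"
  define \<Phi> where "\<Phi> = (\<lambda>x::real. complex_of_real x powr t * (1 - (1 - complex_of_real x) powr (t + 1)))"
  have t1': "Re (t + 1) > 0" using t1 by simp
  have Bint: "(B has_integral Beta (t + 1) (t + 1)) {0..1}"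
    using bint_has_integral[OF t1' t1'] bint_Beta[OF t1' t1'] by (simp add: B_def)
  have cont: "continuous_on {0..1} \<Phi>"
  proof (rule continuous_on_IccI)
    have L1: "((\<lambda>x::real. complex_of_real x powr (t + 1)) \<longlongrightarrow> 0) (at_right 0)"
      by (rule tendsto_powr_complex_0) (auto intro!: tendsto_eq_intros t1')
    have D: "((\<lambda>z. (1 - z) powr (t + 1)) has_field_derivative (-(t + 1))) (at 0)"
      by (auto intro!: derivative_eq_intros)
    have L2: "((\<lambda>x::real. ((1 - complex_of_real x) powr (t + 1) - 1) / complex_of_real x) \<longlongrightarrow> -(t + 1)) (at_right 0)"
    proof -
      from D have "((\<lambda>z. ((1 - z) powr (t + 1) - (1 - 0) powr (t + 1)) / (z - 0)) \<longlongrightarrow> -(t + 1)) (at 0)"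
        unfolding has_field_derivative_iff .
      from filterlim_compose[OF this of_real_at_right_0] show ?thesis by (simp add: o_def)
    qed
    have "((\<lambda>x. - (complex_of_real x powr (t + 1) * (((1 - complex_of_real x) powr (t + 1) - 1) / complex_of_real x)))
          \<longlongrightarrow> - (0 * (-(t + 1)))) (at_right 0)"
      by (intro tendsto_intros L1 L2)
    then have L3: "((\<lambda>x. - (complex_of_real x powr (t + 1) * (((1 - complex_of_real x) powr (t + 1) - 1) / complex_of_real x)))
          \<longlongrightarrow> 0) (at_right 0)" by simp
    have E: "eventually (\<lambda>x. - (complex_of_real x powr (t + 1) * (((1 - complex_of_real x) powr (t + 1) - 1) / complex_of_real x)) = \<Phi> x) (at_right 0)"
      using eventually_at_right_less[of "0::real"]
    proof eventually_elim
      case (elim x)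
      have e: "complex_of_real x powr (t + 1) = complex_of_real x * complex_of_real x powr t"
        using cpowr_split[of "complex_of_real x" "t + 1"] by simp
      show ?case using elim unfolding \<Phi>_def e by (simp add: field_simps)
    qed
    have "(\<Phi> \<longlongrightarrow> 0) (at_right 0)" by (rule Lim_transform_eventually[OF L3 E])
    moreover have "\<Phi> 0 = 0" by (simp add: \<Phi>_def)
    ultimately show "(\<Phi> \<longlongrightarrow> \<Phi> 0) (at_right 0)" by simp
  next
    have M1: "((\<lambda>x::real. complex_of_real x powr t) \<longlongrightarrow> 1 powr t) (at_left 1)"
      by (rule tendsto_powr_complex) (auto intro!: tendsto_eq_intros)
    have M2: "((\<lambda>x::real. (1 - complex_of_real x) powr (t + 1)) \<longlongrightarrow> 0) (at_left 1)"
      by (rule tendsto_powr_complex_0) (auto intro!: tendsto_eq_intros t1')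
    have "(\<Phi> \<longlongrightarrow> 1 powr t * (1 - 0)) (at_left 1)"
      unfolding \<Phi>_def by (intro tendsto_intros M1 M2)
    then show "(\<Phi> \<longlongrightarrow> \<Phi> 1) (at_left 1)" using t1' by (simp add: \<Phi>_def)
  next
    fix x :: real assume "0 < x" "x < 1"
    then have "isCont \<Phi> x" unfolding \<Phi>_def
      by (auto intro!: continuous_intros simp: complex_nonpos_Reals_iff)
    then show "(\<Phi> \<longlongrightarrow> \<Phi> x) (at x)" by (simp add: isCont_def)
  qed simp
  have "((\<lambda>x. t * A x + (2 * t + 1) * B x) has_integral (\<Phi> 1 - \<Phi> 0)) {0..1}"
  proof (rule fundamental_theorem_of_calculus_interior)
    fix x :: real assume x: "x \<in> {0<..<1}"
    have nz: "complex_of_real x \<notin> \<real>\<^sub>\<le>\<^sub>0" "1 - complex_of_real x \<notin> \<real>\<^sub>\<le>\<^sub>0"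
      using x by (auto simp: complex_nonpos_Reals_iff)
    have "((\<lambda>z. z powr t * (1 - (1 - z) powr (t + 1))) has_field_derivative
          (t * complex_of_real x powr (t - 1) * (1 - (1 - complex_of_real x) powr (t + 1))
           + complex_of_real x powr t * ((t + 1) * (1 - complex_of_real x) powr t))) (at (complex_of_real x))"
      using nz by (auto intro!: derivative_eq_intros simp: algebra_simps)
    moreover have "t * complex_of_real x powr (t - 1) * (1 - (1 - complex_of_real x) powr (t + 1))
           + complex_of_real x powr t * ((t + 1) * (1 - complex_of_real x) powr t)
         = t * A x + (2 * t + 1) * B x"
    proof -
      have e1: "(1 - complex_of_real x) powr (t + 1) = (1 - complex_of_real x) * (1 - complex_of_real x) powr t"
        using cpowr_split[of "1 - complex_of_real x" "t + 1"] by simp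
      have e2: "complex_of_real x powr t = complex_of_real x * complex_of_real x powr (t - 1)"
        by (rule cpowr_split)
      show ?thesis unfolding A_def B_def e1 e2 by (simp add: algebra_simps)
    qed
    ultimately show "(\<Phi> has_vector_derivative (t * A x + (2 * t + 1) * B x)) (at x)"
      unfolding \<Phi>_def by (auto dest: has_vector_derivative_real_field)
  qed (use cont in simp_all)
  moreover have "\<Phi> 1 - \<Phi> 0 = 1" using t1' by (simp add: \<Phi>_def)
  ultimately have I1: "((\<lambda>x. t * A x + (2 * t + 1) * B x) has_integral 1) {0..1}" by simp
  have "((\<lambda>x. (1 / t) * ((t * A x + (2 * t + 1) * B x) - (2 * t + 1) * B x)) has_integral
        (1 / t) * (1 - (2 * t + 1) * Beta (t + 1) (t + 1))) {0..1}"
    by (intro has_integral_mult_right has_integral_diff I1 Bint)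
  moreover have "(1 / t) * ((t * A x + (2 * t + 1) * B x) - (2 * t + 1) * B x) = A x" for x
    using t0 by (simp add: field_simps)
  ultimately show ?thesis unfolding A_def[symmetric] by simp
qed



lemma Tri_closed: "closed Tri"
proof -
  have "Tri = {p::real \<times> real. 0 \<le> fst p \<and> fst p \<le> 1 \<and> 0 \<le> snd p \<and> snd p \<le> 1 \<and> fst p + snd p \<ge> 1}"
    by (auto simp: Tri_def)
  also have "closed \<dots>"
    by (intro closed_Collect_conj closed_Collect_le continuous_intros)
  finally show ?thesis .
qed

lemma Tri_sets [measurable]: "Tri \<in> sets borel"
  by (rule borel_closed[OF Tri_closed])

lemma AE_ne1: "AE p in (lborel :: (real \<times> real) measure). fst p \<noteq> 1 \<and> snd p \<noteq> 1"
proof -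
  have n1: "{1::real} \<times> (UNIV :: real set) \<in> null_sets (lborel \<Otimes>\<^sub>M lborel)"
    by (intro lborel.times_in_null_sets1) auto
  have n2: "(UNIV :: real set) \<times> {1::real} \<in> null_sets (lborel \<Otimes>\<^sub>M lborel)"
    by (intro lborel.times_in_null_sets2) auto
  have "({1::real} \<times> (UNIV :: real set)) \<union> ((UNIV :: real set) \<times> {1::real}) \<in> null_sets (lborel :: (real \<times> real) measure)"
    using null_sets.Un[OF n1 n2] by (simp add: lborel_prod)
  then show ?thesis
    by (rule AE_I') auto
qed

lemma AE_Tri_open: "AE p in (lborel :: (real \<times> real) measure). p \<in> Tri \<longrightarrow>
    0 < fst p \<and> fst p < 1 \<and> 0 < snd p \<and> snd p < 1"
  using AE_ne1 by eventually_elim (auto simp: Tri_def)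



abbreviation M2 :: "(real \<times> real) measure" where "M2 \<equiv> lborel \<Otimes>\<^sub>M lborel"

lemma Tri_sets2 [measurable]: "Tri \<in> sets M2"
  unfolding lborel_prod by simp

lemma AE_Tri_open2: "AE p in M2. p \<in> Tri \<longrightarrow> 0 < fst p \<and> fst p < 1 \<and> 0 < snd p \<and> snd p < 1"
  unfolding lborel_prod by (rule AE_Tri_open)

lemma tri_bound_aux:
  fixes x y a :: real
  assumes "0 < x" "x < 1" "0 < y" "y < 1" "x + y \<ge> 1" "0 < a" "a < 1" "y \<ge> 1/2"
  shows "(x * y) powr (-2 * a) \<le> 2 powr (2 * a) * ((x powr -a * (1 - x) powr -a) * (y powr -a * (1 - y) powr -a))"
proof -
  define X where "X = x powr -a"
  define W where "W = (1 - y) powr -a"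
  define V where "V = (1 - x) powr -a * (y powr -a * W)"
  have X0: "X \<ge> 0" and W0: "W \<ge> 0" by (simp_all add: X_def W_def)
  have e: "(x * y) powr (-2 * a) = X * X * y powr (-2 * a)"
    using assms by (simp add: X_def powr_mult powr_add[symmetric])
  have y2: "y powr (-2 * a) \<le> 2 powr (2 * a)"
  proof -
    have "y powr (-2 * a) \<le> (1/2) powr (-2 * a)"
      using assms by (intro powr_mono2') auto
    also have "(1/2::real) powr (-2 * a) = 2 powr (2 * a)"
      by (simp add: powr_minus_divide powr_divide)
    finally show ?thesis .
  qed
  have xw: "X \<le> W"
    unfolding X_def W_def using assms by (intro powr_mono2') auto
  have wv: "W \<le> V"
  proof -
    have "1 \<le> (1 - x) powr -a" using powr_mono2'[of "-a" "1 - x" 1] assms by simp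
    moreover have "1 \<le> y powr -a" using powr_mono2'[of "-a" y 1] assms by simp
    ultimately have "1 \<le> (1 - x) powr -a * y powr -a"
      using mult_mono[of 1 "(1 - x) powr -a" 1 "y powr -a"] by simp
    from mult_right_mono[OF this W0] show ?thesis by (simp add: V_def mult_ac)
  qed
  have "X * X * y powr (-2 * a) \<le> X * W * 2 powr (2 * a)"
    using X0 W0 xw y2 by (intro mult_mono) auto
  also have "\<dots> \<le> X * V * 2 powr (2 * a)"
    using X0 W0 wv by (intro mult_mono) auto
  finally show ?thesis unfolding e V_def W_def X_def by (simp add: mult_ac)
qed



lemma tri_bound:
  fixes x y a :: real
  assumes "0 < x" "x < 1" "0 < y" "y < 1" "x + y \<ge> 1" "0 < a" "a < 1"
  shows "(x * y) powr (-2 * a) \<le> 2 powr (2 * a) * ((x powr -a * (1 - x) powr -a) * (y powr -a * (1 - y) powr -a))"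
proof (cases "y \<ge> 1/2")
  case True
  show ?thesis by (rule tri_bound_aux[OF assms True])
next
  case False
  then have "x \<ge> 1/2" using assms by auto
  from tri_bound_aux[of y x a, OF assms(3,4,1,2) _ assms(6,7) this] assms(5)
  show ?thesis by (simp add: mult_ac)
qed

definition phi :: "real \<Rightarrow> real \<Rightarrow> real" where
  "phi a x = indicator {0..1} x * (x powr -a * (1 - x) powr -a)"

lemma phi_int: assumes "0 < a" "a < 1" shows "integrable lborel (phi a)"
proof -
  have "set_integrable lborel {0..1} (\<lambda>t. t powr (1 - a - 1) * (1 - t) powr (1 - a - 1))"
    using assms by (intro integrable_Beta) auto
  then show ?thesis unfolding set_integrable_def phi_def by simp
qed

lemma phi_nonneg: "phi a x \<ge> 0"
  by (simp add: phi_def)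

lemma prod_int:
  fixes f g :: "real \<Rightarrow> real"
  assumes f: "integrable lborel f" and g: "integrable lborel g"
  shows "integrable M2 (\<lambda>p. f (fst p) * g (snd p))"
proof (rule lborel_pair.Fubini_integrable)
  have [measurable]: "f \<in> borel_measurable lborel" "g \<in> borel_measurable lborel"
    using f g by auto
  show "(\<lambda>p. f (fst p) * g (snd p)) \<in> borel_measurable M2" by measurable
  have "integrable lborel (\<lambda>x. norm (f x) * (\<integral>y. norm (g y) \<partial>lborel))"
    using f by (intro integrable_mult_left integrable_norm)
  then show "integrable lborel (\<lambda>x. \<integral>y. norm (f (fst (x, y)) * g (snd (x, y))) \<partial>lborel)"
    by (simp add: norm_mult abs_mult)
  show "AE x in lborel. integrable lborel (\<lambda>y. f (fst (x, y)) * g (snd (x, y)))"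
    using g by (auto intro!: integrable_mult_right)
qed

definition Dfun :: "real \<Rightarrow> real \<times> real \<Rightarrow> real" where
  "Dfun r p = indicator Tri p * exp ((- r - 1) * ln (fst p * snd p))"

definition Gfun :: "complex \<Rightarrow> real \<times> real \<Rightarrow> complex" where
  "Gfun t p = indicator Tri p * exp ((t - 1) * complex_of_real (ln (fst p * snd p)))"

lemma Dfun_meas [measurable]: "Dfun r \<in> borel_measurable M2"
  unfolding Dfun_def by measurable

lemma Gfun_meas [measurable]: "Gfun t \<in> borel_measurable M2"
  unfolding Gfun_def by measurable

lemma D_int:
  assumes r: "0 < r" "r < 1"
  shows "integrable M2 (Dfun r)"
proof (rule Bochner_Integration.integrable_bound)
  define a where "a = (r + 1) / 2"
  have a: "0 < a" "a < 1" using r by (auto simp: a_def)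
  show "integrable M2 (\<lambda>p. 2 powr (2 * a) * (phi a (fst p) * phi a (snd p)))"
    by (intro integrable_mult_right prod_int phi_int a)
  show "Dfun r \<in> borel_measurable M2" by measurable
  show "AE p in M2. norm (Dfun r p) \<le> norm (2 powr (2 * a) * (phi a (fst p) * phi a (snd p)))"
    using AE_Tri_open2
  proof eventually_elim
    case (elim p)
    show ?case
    proof (cases "p \<in> Tri")
      case False
      then show ?thesis by (simp add: Dfun_def)
    next
      case True
      with elim have p: "0 < fst p" "fst p < 1" "0 < snd p" "snd p < 1" by auto
      have s: "fst p + snd p \<ge> 1" using True by (auto simp: Tri_def)
      have "norm (Dfun r p) = (fst p * snd p) powr (-2 * a)"
        using True p by (simp add: Dfun_def powr_def a_def algebra_simps)
      also have "\<dots> \<le> 2 powr (2 * a) * ((fst p powr -a * (1 - fst p) powr -a) * (snd p powr -a * (1 - snd p) powr -a))"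
        by (rule tri_bound[OF p s a])
      also have "\<dots> = norm (2 powr (2 * a) * (phi a (fst p) * phi a (snd p)))"
        using p by (simp add: phi_def abs_mult)
      finally show ?thesis .
    qed
  qed
qed

lemma G_le_D:
  assumes "norm t \<le> r"
  shows "norm (Gfun t p) \<le> Dfun r p"
proof (cases "p \<in> Tri")
  case False
  then show ?thesis by (simp add: Gfun_def Dfun_def)
next
  case True
  define L where "L = ln (fst p * snd p)"
  have "fst p * snd p \<le> 1" using True by (auto simp: Tri_def intro: mult_le_one)
  moreover have "fst p * snd p \<ge> 0" using True by (auto simp: Tri_def)
  ultimately have L0: "L \<le> 0" unfolding L_def
    by (cases "fst p * snd p > 0") auto
  have "Re t \<ge> - r" using assms abs_Re_le_cmod[of t] by linarith
  then have "(Re t - 1) * L \<le> (- r - 1) * L"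
    using L0 by (intro mult_right_mono_neg) auto
  then show ?thesis using True
    by (simp add: Gfun_def Dfun_def norm_mult norm_exp_eq_Re L_def[symmetric])
qed

lemma G_int:
  assumes "0 < norm t" "norm t < 1"
  shows "integrable M2 (Gfun t)"
proof (rule Bochner_Integration.integrable_bound)
  show "integrable M2 (Dfun (norm t))" using D_int assms by auto
  show "Gfun t \<in> borel_measurable M2" by measurable
  show "AE p in M2. norm (Gfun t p) \<le> norm (Dfun (norm t) p)"
    using G_le_D[of t "norm t"] by (auto intro!: AE_I2 order_trans[OF _ abs_ge_self])
qed



definition fn :: "nat \<Rightarrow> real \<times> real \<Rightarrow> real" where
  "fn n p = (- ln (fst p * snd p)) ^ n / (fst p * snd p)"

lemma fn_meas [measurable]: "fn n \<in> borel_measurable M2"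
  unfolding fn_def by measurable

lemma Icoef_M2: "Icoef n = integral\<^sup>L M2 (\<lambda>p. indicator Tri p * fn n p)"
  unfolding Icoef_def set_lebesgue_integral_def fn_def
  by (subst lborel_prod[symmetric]) simp

lemma exp_partial_le:
  fixes x :: real assumes "0 \<le> x" and that: "finite I"
  shows "(\<Sum>k\<in>I. x ^ k / fact k) \<le> exp x"
proof -
  have s: "(\<lambda>k. x ^ k /\<^sub>R fact k) sums exp x" by (rule exp_converges)
  have "(\<Sum>k\<in>I. x ^ k /\<^sub>R fact k) \<le> suminf (\<lambda>k. x ^ k /\<^sub>R fact k)"
    by (rule sum_le_suminf) (use s assms that in \<open>auto simp: sums_iff\<close>)
  also have "\<dots> = exp x" using s by (simp add: sums_iff)
  finally show ?thesis by (simp add: divide_inverse mult.commute)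
qed

lemma exp_term_le:
  fixes x :: real assumes "0 \<le> x"
  shows "x ^ n / fact n \<le> exp x"
  using exp_partial_le[OF assms, of "{n}"] by simp

lemma Dfun_eq:
  assumes "p \<in> Tri" "0 < fst p * snd p"
  shows "Dfun r p = exp (r * (- ln (fst p * snd p))) / (fst p * snd p)"
proof -
  define u where "u = fst p * snd p"
  have u: "u > 0" using assms by (simp add: u_def)
  have "exp (- ln u) = 1 / u"
    using u by (simp add: exp_minus inverse_eq_divide)
  moreover have "exp ((- r - 1) * ln u) = exp (r * (- ln u)) * exp (- ln u)"
    by (simp add: exp_add[symmetric] algebra_simps)
  ultimately show ?thesis using assms
    by (simp add: Dfun_def u_def[symmetric])
qed

lemma fn_int:
  fixes r :: real
  assumes r: "0 < r" "r < 1"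
  shows "integrable M2 (\<lambda>p. indicator Tri p * fn n p)"
proof (rule Bochner_Integration.integrable_bound)
  show "integrable M2 (\<lambda>p. (fact n / r ^ n) * Dfun r p)"
    by (intro integrable_mult_right D_int r)
  show "(\<lambda>p. indicator Tri p * fn n p) \<in> borel_measurable M2" by measurable
  show "AE p in M2. norm (indicator Tri p * fn n p) \<le> norm ((fact n / r ^ n) * Dfun r p)"
    using AE_Tri_open2
  proof eventually_elim
    case (elim p)
    show ?case
    proof (cases "p \<in> Tri")
      case False
      then show ?thesis by (simp add: Dfun_def)
    next
      case True
      with elim have p: "0 < fst p" "fst p < 1" "0 < snd p" "snd p < 1" by auto
      define u where "u = fst p * snd p"
      have u: "0 < u" "u \<le> 1" using p by (auto simp: u_def intro: mult_le_one)
      define y where "y = - ln u"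
      have y: "0 \<le> y" using u by (simp add: y_def)
      have D: "Dfun r p = exp (r * y) / u" using Dfun_eq[OF True] u by (simp add: u_def y_def)
      have "(r * y) ^ n / fact n \<le> exp (r * y)" using y r by (intro exp_term_le) auto
      then have "y ^ n \<le> fact n / r ^ n * exp (r * y)"
        using r by (simp add: field_simps power_mult_distrib)
      then have "y ^ n / u \<le> fact n / r ^ n * exp (r * y) / u"
        using u by (intro divide_right_mono) auto
      moreover have "fn n p = y ^ n / u" by (simp add: fn_def y_def u_def)
      moreover have "0 \<le> y ^ n / u" using y u by auto
      ultimately show ?thesis using True D r u y by (simp add: abs_mult)
    qed
  qed
qed



lemma Tm_point:
  fixes t :: complex and u :: real
  assumes u: "0 < u"
  shows "complex_of_real ((- ln u) ^ n / u) * ((-1) ^ n * t ^ n / fact n)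
         = (t * complex_of_real (ln u)) ^ n /\<^sub>R fact n / complex_of_real u"
proof -
  have "complex_of_real ((- ln u) ^ n) * (-1) ^ n = complex_of_real (ln u) ^ n"
    by (simp add: power_mult_distrib[symmetric])
  then show ?thesis using u
    by (simp add: scaleR_conv_of_real power_mult_distrib field_simps)
qed

lemma series_sums:
  assumes t: "0 < norm t" "norm t < 1"
  shows "(\<lambda>n. (-1) ^ n * complex_of_real (Icoef n / fact n) * t ^ n) sums integral\<^sup>L M2 (Gfun t)"
proof -
  define r where "r = norm t"
  have r: "0 < r" "r < 1" using t by (auto simp: r_def)
  define Tm where "Tm = (\<lambda>n p. complex_of_real (indicator Tri p * fn n p) * ((-1) ^ n * t ^ n / fact n))"
  define S where "S = (\<lambda>N p. \<Sum>n<N. Tm n p)"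
  have Tm_meas [measurable]: "Tm n \<in> borel_measurable M2" for n
    unfolding Tm_def by measurable
  have S_meas [measurable]: "S N \<in> borel_measurable M2" for N
    unfolding S_def by measurable
  have Tm_int: "integrable M2 (Tm n)" for n
    unfolding Tm_def using fn_int[OF r, of n] by (intro integrable_mult_left integrable_of_real)
  have intS: "integral\<^sup>L M2 (S N) = (\<Sum>n<N. (-1) ^ n * complex_of_real (Icoef n / fact n) * t ^ n)" for N
  proof -
    have "integral\<^sup>L M2 (S N) = (\<Sum>n<N. integral\<^sup>L M2 (Tm n))"
      unfolding S_def by (rule Bochner_Integration.integral_sum) (rule Tm_int)
    also have "\<dots> = (\<Sum>n<N. (-1) ^ n * complex_of_real (Icoef n / fact n) * t ^ n)"
    proof (rule sum.cong)
      fix n assume "n \<in> {..<N}"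
      have "integral\<^sup>L M2 (Tm n) = complex_of_real (Icoef n) * ((-1) ^ n * t ^ n / fact n)"
        unfolding Tm_def Icoef_M2 by (simp only: integral_mult_left_zero integral_complex_of_real)
      also have "\<dots> = (-1) ^ n * complex_of_real (Icoef n / fact n) * t ^ n"
        by (simp add: field_simps)
      finally show "integral\<^sup>L M2 (Tm n) = (-1) ^ n * complex_of_real (Icoef n / fact n) * t ^ n" .
    qed simp
    finally show ?thesis .
  qed
  have lim: "(\<lambda>N. integral\<^sup>L M2 (S N)) \<longlonglongrightarrow> integral\<^sup>L M2 (Gfun t)"
  proof (rule integral_dominated_convergence[where w = "Dfun r"])
    show "Gfun t \<in> borel_measurable M2" by measurable
    show "S N \<in> borel_measurable M2" for N by measurable
    show "integrable M2 (Dfun r)" by (rule D_int[OF r])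
    show "AE p in M2. (\<lambda>N. S N p) \<longlonglongrightarrow> Gfun t p"
      using AE_Tri_open2
    proof eventually_elim
      case (elim p)
      show ?case
      proof (cases "p \<in> Tri")
        case False
        then show ?thesis by (simp add: S_def Tm_def Gfun_def)
      next
        case True
        with elim have p: "0 < fst p" "fst p < 1" "0 < snd p" "snd p < 1" by auto
        define u where "u = fst p * snd p"
        have u: "0 < u" using p by (simp add: u_def)
        have "(\<lambda>n. (t * complex_of_real (ln u)) ^ n /\<^sub>R fact n / complex_of_real u)
              sums (exp (t * complex_of_real (ln u)) / complex_of_real u)"
          by (intro sums_divide exp_converges)
        moreover have "Tm n p = (t * complex_of_real (ln u)) ^ n /\<^sub>R fact n / complex_of_real u" for n
          using True Tm_point[OF u, of n t] by (simp add: Tm_def fn_def u_def)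
        moreover have "exp (t * complex_of_real (ln u)) / complex_of_real u = Gfun t p"
        proof -
          have "complex_of_real u = exp (complex_of_real (ln u))" using u
            by (simp add: exp_of_real)
          then show ?thesis using True
            by (simp add: Gfun_def u_def[symmetric] exp_diff[symmetric] algebra_simps)
        qed
        ultimately show ?thesis by (simp add: S_def sums_def)
      qed
    qed
    show "AE p in M2. norm (S N p) \<le> Dfun r p" for N
      using AE_Tri_open2
    proof eventually_elim
      case (elim p)
      show ?case
      proof (cases "p \<in> Tri")
        case False
        then show ?thesis by (simp add: S_def Tm_def Dfun_def)
      next
        case True
        with elim have p: "0 < fst p" "fst p < 1" "0 < snd p" "snd p < 1" by auto
        define u where "u = fst p * snd p"
        have u: "0 < u" "u \<le> 1" using p by (auto simp: u_def intro: mult_le_one)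
        define y where "y = - ln u"
        have y: "0 \<le> y" using u by (simp add: y_def)
        have "norm (S N p) \<le> (\<Sum>n<N. norm (Tm n p))" unfolding S_def by (rule norm_sum)
        also have "\<dots> = (\<Sum>n<N. (r * y) ^ n / fact n) / u"
          unfolding sum_divide_distrib
        proof (rule sum.cong)
          fix n assume "n \<in> {..<N}"
          have au: "\<bar>fst p\<bar> * \<bar>snd p\<bar> = u" using p by (simp add: u_def)
          show "norm (Tm n p) = (r * y) ^ n / fact n / u"
            using True u y au by (simp add: Tm_def fn_def norm_mult norm_divide norm_power
              y_def[symmetric] u_def[symmetric] r_def[symmetric] power_mult_distrib field_simps)
        qed simp
        also have "\<dots> \<le> exp (r * y) / u"
          using u y r by (intro divide_right_mono exp_partial_le) auto
        also have "\<dots> = Dfun r p" using Dfun_eq[OF True] u by (simp add: u_def y_def)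
        finally show ?thesis .
      qed
    qed
  qed
  then show ?thesis unfolding sums_def intS .
qed



lemma cpow_exp: "x > 0 \<Longrightarrow> complex_of_real x powr w = exp (w * complex_of_real (ln x))"
  by (simp add: powr_def Ln_of_real)

lemma inner_integral:
  assumes x: "0 < x" "x < 1" and t0: "t \<noteq> 0"
  shows "(\<integral>y. Gfun t (x, y) \<partial>lborel) =
     complex_of_real x powr (t - 1) * (1 - (1 - complex_of_real x) powr t) / t"
proof -
  define c where "c = complex_of_real x powr (t - 1)"
  have eq: "Gfun t (x, y) = indicator {1 - x..1} y *\<^sub>R (c * complex_of_real y powr (t - 1))" for y
  proof (cases "y \<in> {1 - x..1}")
    case True
    then have y: "y > 0" using x by auto
    have "(x, y) \<in> Tri" using True x by (auto simp: Tri_def)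
    moreover have "exp ((t - 1) * complex_of_real (ln (x * y))) = c * complex_of_real y powr (t - 1)"
      using x y by (simp add: c_def cpow_exp ln_mult exp_add[symmetric] algebra_simps)
    ultimately show ?thesis using True by (simp add: Gfun_def)
  next
    case False
    then have "(x, y) \<notin> Tri" using x by (auto simp: Tri_def)
    then show ?thesis using False by (simp add: Gfun_def)
  qed
  have cont: "continuous_on {1 - x..1} (\<lambda>y. complex_of_real y powr (t - 1))"
    using x by (intro continuous_intros) (auto simp: complex_nonpos_Reals_iff)
  have si: "set_integrable lborel {1 - x..1} (\<lambda>y. complex_of_real y powr (t - 1))"
    by (rule borel_integrable_atLeastAtMost'[OF cont])
  have hk: "((\<lambda>y. complex_of_real y powr (t - 1)) has_integral
      (complex_of_real 1 powr t / t - complex_of_real (1 - x) powr t / t)) {1 - x..1}"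
  proof (rule fundamental_theorem_of_calculus)
    show "1 - x \<le> 1" using x by simp
    fix y assume y: "y \<in> {1 - x..1}"
    then have y0: "y > 0" using x by auto
    have "((\<lambda>z. z powr t / t) has_field_derivative complex_of_real y powr (t - 1)) (at (complex_of_real y))"
      using y0 t0 by (auto intro!: derivative_eq_intros simp: complex_nonpos_Reals_iff)
    then show "((\<lambda>y. complex_of_real y powr t / t) has_vector_derivative complex_of_real y powr (t - 1))
       (at y within {1 - x..1})"
      by (auto dest: has_vector_derivative_real_field intro: has_vector_derivative_at_within)
  qed
  have "(\<integral>y. Gfun t (x, y) \<partial>lborel) = (\<integral>y. c * (indicator {1 - x..1} y *\<^sub>R complex_of_real y powr (t - 1)) \<partial>lborel)"
    by (intro Bochner_Integration.integral_cong) (simp_all add: eq)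
  also have "\<dots> = c * (LINT y:{1 - x..1}|lborel. complex_of_real y powr (t - 1))"
    unfolding set_lebesgue_integral_def by (rule integral_mult_right_zero)
  also have "(LINT y:{1 - x..1}|lborel. complex_of_real y powr (t - 1)) = integral {1 - x..1} (\<lambda>y. complex_of_real y powr (t - 1))"
    by (rule set_borel_integral_eq_integral(2)[OF si])
  also have "\<dots> = (1 - (1 - complex_of_real x) powr t) / t"
    using integral_unique[OF hk] by (simp add: diff_divide_distrib)
  finally show ?thesis by (simp add: c_def)
qed



lemma G_value:
  assumes t: "0 < norm t" "norm t < 1"
  shows "integral\<^sup>L M2 (Gfun t) = (1 - (2 * t + 1) * Beta (t + 1) (t + 1)) / t\<^sup>2"
proof -
  have t0: "t \<noteq> 0" using t by auto
  have t1: "Re t > -1" using t abs_Re_le_cmod[of t] by linarith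
  have GI: "integrable M2 (Gfun t)" by (rule G_int[OF t])
  define h where "h = (\<lambda>x. \<integral>y. Gfun t (x, y) \<partial>lborel)"
  have hint: "integrable lborel h"
    unfolding h_def by (rule lborel_pair.integrable_fst'[OF GI])
  have eqI: "integral\<^sup>L M2 (Gfun t) = integral\<^sup>L lborel h"
    using lborel_pair.integral_fst'[OF GI] by (simp add: h_def)
  define A where "A = (\<lambda>x::real. complex_of_real x powr (t - 1) * (1 - (1 - complex_of_real x) powr t))"
  define g where "g = (\<lambda>x::real. indicator {0<..<1} x *\<^sub>R (A x / t))"
  have contA: "continuous_on {0<..<1} (\<lambda>x. A x / t)"
    unfolding A_def using t0 by (intro continuous_intros) (auto simp: complex_nonpos_Reals_iff)
  have gmeas: "g \<in> borel_measurable lborel"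
    unfolding g_def using borel_measurable_continuous_on_indicator[OF _ contA] by simp
  have AEeq: "AE x in lborel. h x = g x"
    using AE_lborel_singleton[of "0::real"] AE_lborel_singleton[of "1::real"]
  proof eventually_elim
    case (elim x)
    show ?case
    proof (cases "0 < x \<and> x < 1")
      case True
      then show ?thesis using inner_integral[of x t] t0 by (simp add: h_def g_def A_def)
    next
      case False
      then have "x < 0 \<or> x > 1" using elim by auto
      then have "\<And>y. (x, y) \<notin> Tri" by (auto simp: Tri_def)
      then have "h x = 0" by (simp add: h_def Gfun_def)
      moreover have "g x = 0" using False by (simp add: g_def)
      ultimately show ?thesis by simp
    qed
  qed
  have hmeas: "h \<in> borel_measurable lborel" using hint by auto
  have I2: "integral\<^sup>L lborel h = integral\<^sup>L lborel g"
    by (rule integral_cong_AE[OF hmeas gmeas AEeq])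
  have gint: "integrable lborel g"
    using integrable_cong_AE[OF hmeas gmeas AEeq] hint by simp
  then have si: "set_integrable lborel {0<..<1} (\<lambda>x. A x / t)"
    by (simp add: set_integrable_def g_def)
  have I3: "integral\<^sup>L lborel g = integral {0<..<1} (\<lambda>x. A x / t)"
    unfolding g_def using set_borel_integral_eq_integral(2)[OF si] unfolding set_lebesgue_integral_def .
  have "(A has_integral ((1 - (2 * t + 1) * Beta (t + 1) (t + 1)) / t)) {0..1}"
    unfolding A_def by (rule ftc_identity[OF t1 t0])
  then have "(A has_integral ((1 - (2 * t + 1) * Beta (t + 1) (t + 1)) / t)) {0<..<1}"
    by (simp add: has_integral_Icc_iff_Ioo)
  then have "((\<lambda>x. A x / t) has_integral ((1 - (2 * t + 1) * Beta (t + 1) (t + 1)) / t / t)) {0<..<1}"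
    by (rule has_integral_divide)
  then have I4: "integral {0<..<1} (\<lambda>x. A x / t) = (1 - (2 * t + 1) * Beta (t + 1) (t + 1)) / t / t"
    by (rule integral_unique)
  show ?thesis using eqI I2 I3 I4 by (simp add: power2_eq_square)
qed



lemma final_alg: "(2 * t + 1) * Beta (t + 1) (t + 1) = 1 / gbinom (2 * t) t"
proof -
  have e1: "t + 1 + (t + 1) = (2 * t + 1) + 1" by simp
  have e2: "2 * t - t + 1 = t + 1" by simp
  have "(2 * t + 1) * Beta (t + 1) (t + 1) = Gamma (t + 1) * Gamma (t + 1) * ((2 * t + 1) * rGamma ((2 * t + 1) + 1))"
    unfolding Beta_altdef e1 by (simp only: mult_ac)
  also have "(2 * t + 1) * rGamma ((2 * t + 1) + 1) = rGamma (2 * t + 1)"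
    by (rule rGamma_plus1)
  also have "Gamma (t + 1) * Gamma (t + 1) * rGamma (2 * t + 1) = 1 / gbinom (2 * t) t"
    unfolding gbinom_def e2 rGamma_inverse_Gamma by (simp add: divide_inverse)
  finally show ?thesis .
qed

theorem theorem5:
  fixes t :: complex
  assumes "0 < norm t" and "norm t < 1"
  shows "(\<lambda>n. (-1) ^ n * complex_of_real (Icoef n / fact n) * t ^ n)
           sums ((1 / t\<^sup>2) * (1 - 1 / gbinom (2 * t) t))"
proof -
  have "(\<lambda>n. (-1) ^ n * complex_of_real (Icoef n / fact n) * t ^ n) sums integral\<^sup>L M2 (Gfun t)"
    by (rule series_sums[OF assms])
  also have "integral\<^sup>L M2 (Gfun t) = (1 - (2 * t + 1) * Beta (t + 1) (t + 1)) / t\<^sup>2"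
    by (rule G_value[OF assms])
  also have "\<dots> = (1 / t\<^sup>2) * (1 - 1 / gbinom (2 * t) t)"
    by (simp add: final_alg)
  finally show ?thesis .
qed


end
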